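(* Let $p>1$ and let $A$ be a real $r$-matrix of order $n_1\times\cdots\times n_r$. Then: (a) $\eta^{(p)}(\mathrm{sym}(A))\leq \dfrac{r!}{r^{r/p}}\|A\|_p$; (b) if $A$ is nonnegative, then $\eta^{(p)}(\mathrm{sym}(A))=\dfrac{r!}{r^{r/p}}\|A\|_p$.
   Context: An $r$-matrix of order $n_1\times\cdots\times n_r$ is a function on $[n_1]\times\cdots\times[n_r]$ with values $a_{i_1,\ldots,i_r}$. Symmetrant: let $n=n_1+\cdots+n_r$, partition $[n]$ into consecutive intervals $N_1,\ldots,N_r$ with $|N_k|=n_k$; for $j\in[n]$ let $\sigma(j)$ be the $k$ with $j\in N_k$ and $\theta(j)$ the position of $j$ within $N_{\sigma(j)}$ (in increasing order). Then $\mathrm{sym}(A)$ is the cubical $r$-matrix $B$ of order $n$ with $b_{j_1,\ldots,j_r}=0$ if $\sigma(j_1),\ldots,\sigma(j_r)$ are not all distinct, and otherwise $b_{j_1,\ldots,j_r}=a_{i_1,\ldots,i_r}$ where $i_{\sigma(j_s)}=\theta(j_s)$ for all $s\in[r]$. For a real symmetric cubical $B$ of order $n$, $P_B(\mathbf{x})=\sum b_{j_1,\ldots,j_r}x_{j_1}\cdots x_{j_r}$ and $\eta^{(p)}(B)=\max\{|P_B(\mathbf{x})|:\mathbf{x}\in\mathbb{R}^n,|\mathbf{x}|_p=1\}$. The spectral $p$-norm is $\|A\|_p=\max\{|\sum a_{i_1,\ldots,i_r}\overline{x^{(1)}_{i_1}}\cdots\overline{x^{(r)}_{i_r}}|:\mathbf{x}^{(k)}\in\mathbb{C}^{n_k},\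 |\mathbf{x}^{(k)}|_p=1\ \forall k\}$. *)

theory Defs
  imports "HOL-Analysis.Analysis"
begin

text \<open>Conventions: indices are 0-based. An r-matrix of order n_1 x ... x n_r is a
function A on index tuples i (functions nat => nat), where only tuples in
PiE {..<r} (\<lambda>k. {..<n k}) matter; the orders are n 0, ..., n (r-1).\<close>

definition idx :: "nat \<Rightarrow> (nat \<Rightarrow> nat) \<Rightarrow> (nat \<Rightarrow> nat) set" where
  "idx r n = PiE {..<r} (\<lambda>k. {..<n k})"

definition pnorm :: "real \<Rightarrow> nat \<Rightarrow> (nat \<Rightarrow> 'a::real_normed_vector) \<Rightarrow> real" where
  "pnorm p m x = (\<Sum>i<m. norm (x i) powr p) powr (1 / p)"

definition offs :: "(nat \<Rightarrow> nat) \<Rightarrow> nat \<Rightarrow> nat" where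
  "offs n k = (\<Sum>l<k. n l)"

definition sig :: "nat \<Rightarrow> (nat \<Rightarrow> nat) \<Rightarrow> nat \<Rightarrow> nat" where
  "sig r n j = (THE k. k < r \<and> offs n k \<le> j \<and> j < offs n k + n k)"

definition theta :: "nat \<Rightarrow> (nat \<Rightarrow> nat) \<Rightarrow> nat \<Rightarrow> nat" where
  "theta r n j = j - offs n (sig r n j)"

definition symm :: "nat \<Rightarrow> (nat \<Rightarrow> nat) \<Rightarrow> ((nat \<Rightarrow> nat) \<Rightarrow> real) \<Rightarrow> (nat \<Rightarrow> nat) \<Rightarrow> real" where
  "symm r n A j =
     (if inj_on (\<lambda>s. sig r n (j s)) {..<r}
      then A (\<lambda>k\<in>{..<r}. theta r n (j (THE s. s < r \<and> sig r n (j s) = k)))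
      else 0)"

definition formP :: "nat \<Rightarrow> nat \<Rightarrow> ((nat \<Rightarrow> nat) \<Rightarrow> real) \<Rightarrow> (nat \<Rightarrow> real) \<Rightarrow> real" where
  "formP r N B x = (\<Sum>j\<in>idx r (\<lambda>_. N). B j * (\<Prod>s<r. x (j s)))"

definition eta :: "real \<Rightarrow> nat \<Rightarrow> nat \<Rightarrow> ((nat \<Rightarrow> nat) \<Rightarrow> real) \<Rightarrow> real" where
  "eta p r N B = Sup {\<bar>formP r N B x\<bar> | x. pnorm p N x = 1}"

definition spnorm :: "real \<Rightarrow> nat \<Rightarrow> (nat \<Rightarrow> nat) \<Rightarrow> ((nat \<Rightarrow> nat) \<Rightarrow> real) \<Rightarrow> real" where
  "spnorm p r n A = Sup {cmod (\<Sum>i\<in>idx r n. complex_of_real (A i) * (\<Prod>k<r. cnj (xs k (i k))))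
                        | xs :: nat \<Rightarrow> nat \<Rightarrow> complex. \<forall>k<r. pnorm p (n k) (xs k) = 1}"

end

theory Submission
  imports Defs
begin


lemma offs_le: "k < k' \<Longrightarrow> offs n k + n k \<le> offs n k'"
proof -
  assume "k < k'"
  have "offs n k + n k = (\<Sum>l<Suc k. n l)" by (simp add: offs_def)
  also have "\<dots> \<le> (\<Sum>l<k'. n l)" using \<open>k<k'\<close> by (intro sum_mono2) auto
  finally show ?thesis by (simp add: offs_def)
qed

lemma offs_uniq:
  assumes "offs n k \<le> j" "j < offs n k + n k" "offs n k' \<le> j" "j < offs n k' + n k'"
  shows "k = k'"
proof (rule ccontr)
  assume "k \<noteq> k'"
  then consider "k < k'" | "k' < k" by linarith
  then show False
  proof cases
    case 1 from offs_le[OF 1, of n] assms show False by linarith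
  next
    case 2 from offs_le[OF 2, of n] assms show False by linarith
  qed
qed

lemma offs_ex: "j < offs n r \<Longrightarrow> \<exists>k<r. offs n k \<le> j \<and> j < offs n k + n k"
proof (induction r)
  case 0 then show ?case by (simp add: offs_def)
next
  case (Suc r)
  show ?case
  proof (cases "j < offs n r")
    case True then show ?thesis using Suc.IH by (meson less_Suc_eq)
  next
    case False then show ?thesis using Suc.prems by (auto simp: offs_def intro!: exI[of _ r])
  qed
qed

lemma sig_prop:
  assumes "j < offs n r"
  shows "sig r n j < r" "offs n (sig r n j) \<le> j" "j < offs n (sig r n j) + n (sig r n j)"
proof -
  have "\<exists>!k. k < r \<and> offs n k \<le> j \<and> j < offs n k + n k"
    using offs_ex[OF assms] offs_uniq by blast
  from theI'[OF this] show "sig r n j < r" "offs n (sig r n j) \<le> j" "j < offs n (sig r n j) + n (sig r n j)"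
    unfolding sig_def by auto
qed

lemma sig_block: "k < r \<Longrightarrow> i < n k \<Longrightarrow> sig r n (offs n k + i) = k"
  unfolding sig_def by (rule the_equality) (auto intro: offs_uniq)

lemma theta_block: "k < r \<Longrightarrow> i < n k \<Longrightarrow> theta r n (offs n k + i) = i"
  by (simp add: theta_def sig_block)

lemma block_lt: "k < r \<Longrightarrow> i < n k \<Longrightarrow> offs n k + i < offs n r"
  using offs_le[of k r n] by linarith

lemma sum_split_aux: "(\<Sum>m<a+(b::nat). f m) = (\<Sum>m<a. f m) + (\<Sum>i<b. f (a + i))"
  by (induction b) (auto simp: add.assoc)

lemma sum_blocks: "(\<Sum>m<offs n r. f m) = (\<Sum>k<r. \<Sum>i<n k. f (offs n k + i))"
proof (induction r)
  case 0 then show ?case by (simp add: offs_def)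
next
  case (Suc r)
  have "offs n (Suc r) = offs n r + n r" by (simp add: offs_def)
  then have "(\<Sum>m<offs n (Suc r). f m) = (\<Sum>m<offs n r. f m) + (\<Sum>i<n r. f (offs n r + i))"
    by (simp add: sum_split_aux)
  then show ?case using Suc by simp
qed

definition Phi :: "nat \<Rightarrow> (nat \<Rightarrow> nat) \<Rightarrow> (nat \<Rightarrow> nat) \<Rightarrow> (nat \<Rightarrow> nat) \<Rightarrow> nat \<Rightarrow> nat" where
  "Phi r n \<pi> i = (\<lambda>s\<in>{..<r}. offs n (\<pi> s) + i (\<pi> s))"

lemma idx_lt: "i \<in> idx r n \<Longrightarrow> k < r \<Longrightarrow> i k < n k"
  by (auto simp: idx_def PiE_iff)

lemma Phi_idx:
  assumes "\<pi> permutes {..<r}" "i \<in> idx r n"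
  shows "Phi r n \<pi> i \<in> idx r (\<lambda>_. offs n r)"
  unfolding idx_def Phi_def
proof (rule restrict_PiE_iff[THEN iffD2], intro ballI)
  fix s assume "s \<in> {..<r}"
  then have ps: "\<pi> s < r" using permutes_in_image[OF assms(1)] by auto
  show "offs n (\<pi> s) + i (\<pi> s) \<in> {..<offs n r}"
    using block_lt[of "\<pi> s" r "i (\<pi> s)" n] ps idx_lt[OF assms(2) ps] by simp
qed

lemma Phi_sig:
  assumes "\<pi> permutes {..<r}" "i \<in> idx r n" "s < r"
  shows "sig r n (Phi r n \<pi> i s) = \<pi> s" "theta r n (Phi r n \<pi> i s) = i (\<pi> s)"
proof -
  have ps: "\<pi> s < r" using permutes_in_image[OF assms(1)] assms(3) by auto
  have "i (\<pi> s) < n (\<pi> s)" using idx_lt[OF assms(2) ps] .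
  then show "sig r n (Phi r n \<pi> i s) = \<pi> s" "theta r n (Phi r n \<pi> i s) = i (\<pi> s)"
    using ps assms(3) by (simp_all add: Phi_def sig_block theta_block)
qed

lemma symm_Phi:
  assumes "\<pi> permutes {..<r}" "i \<in> idx r n"
  shows "symm r n A (Phi r n \<pi> i) = A i"
proof -
  have inj: "inj_on \<pi> {..<r}" using assms(1) permutes_inj_on by blast
  have injs: "inj_on (\<lambda>s. sig r n (Phi r n \<pi> i s)) {..<r}"
  proof (rule inj_onI)
    fix s t assume "s \<in> {..<r}" "t \<in> {..<r}" "sig r n (Phi r n \<pi> i s) = sig r n (Phi r n \<pi> i t)"
    then have "\<pi> s = \<pi> t" using Phi_sig(1)[OF assms] by simp
    then show "s = t" using inj \<open>s \<in> {..<r}\<close> \<open>t \<in> {..<r}\<close> by (simp add: inj_on_eq_iff)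
  qed
  have th: "(THE s. s < r \<and> sig r n (Phi r n \<pi> i s) = k) = inv \<pi> k" if "k < r" for k
  proof (rule the_equality)
    have iv: "inv \<pi> k < r" using permutes_in_image[OF permutes_inv[OF assms(1)]] that by simp
    show "inv \<pi> k < r \<and> sig r n (Phi r n \<pi> i (inv \<pi> k)) = k"
      using iv Phi_sig[OF assms iv] permutes_inverses(1)[OF assms(1)] by simp
  next
    fix s assume "s < r \<and> sig r n (Phi r n \<pi> i s) = k"
    then have "s < r" "\<pi> s = k" using Phi_sig[OF assms] by auto
    then show "s = inv \<pi> k" using permutes_inverses(2)[OF assms(1)] by auto
  qed
  have "(\<lambda>k\<in>{..<r}. theta r n (Phi r n \<pi> i (THE s. s < r \<and> sig r n (Phi r n \<pi> i s) = k))) = i"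
  proof
    fix k show "(\<lambda>k\<in>{..<r}. theta r n (Phi r n \<pi> i (THE s. s < r \<and> sig r n (Phi r n \<pi> i s) = k))) k = i k"
    proof (cases "k < r")
      case True
      have iv: "inv \<pi> k < r" using permutes_in_image[OF permutes_inv[OF assms(1)]] True by simp
      show ?thesis using True th[OF True] Phi_sig(2)[OF assms iv] permutes_inverses(1)[OF assms(1)] by simp
    next
      case False then show ?thesis using assms(2) by (auto simp: idx_def PiE_iff extensional_def)
    qed
  qed
  then show ?thesis using injs by (simp add: symm_def)
qed


lemma Phi_inj: "inj_on (\<lambda>(\<pi>, i). Phi r n \<pi> i) ({\<pi>. \<pi> permutes {..<r}} \<times> idx r n)"
proof (rule inj_onI, clarify)
  fix \<pi> i \<pi>' i'
  assume a: "\<pi> permutes {..<r}" "i \<in> idx r n" "\<pi>' permutes {..<r}" "i' \<in> idx r n"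
    and e: "Phi r n \<pi> i = Phi r n \<pi>' i'"
  have pe: "\<pi> s = \<pi>' s" for s
  proof (cases "s < r")
    case True
    have "sig r n (Phi r n \<pi> i s) = sig r n (Phi r n \<pi>' i' s)" using e by simp
    then show ?thesis using Phi_sig(1)[OF a(1,2) True] Phi_sig(1)[OF a(3,4) True] by simp
  next
    case False then show ?thesis using permutes_not_in[OF a(1)] permutes_not_in[OF a(3)] by simp
  qed
  then have peq: "\<pi> = \<pi>'" by auto
  have ie: "i k = i' k" for k
  proof (cases "k < r")
    case True
    define s where "s = inv \<pi> k"
    have sr: "s < r" using permutes_in_image[OF permutes_inv[OF a(1)]] True by (simp add: s_def)
    have ks: "\<pi> s = k" using permutes_inverses(1)[OF a(1)] by (simp add: s_def)
    have "theta r n (Phi r n \<pi> i s) = theta r n (Phi r n \<pi>' i' s)" using e by simp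
    then show ?thesis using Phi_sig(2)[OF a(1,2) sr] Phi_sig(2)[OF a(3,4) sr] ks pe[of s] by simp
  next
    case False then show ?thesis using a(2,4) by (auto simp: idx_def PiE_iff extensional_def)
  qed
  then have "i = i'" by auto
  with peq show "\<pi> = \<pi>' \<and> i = i'" by simp
qed

lemma Phi_surj:
  assumes "j \<in> idx r (\<lambda>_. offs n r)" "inj_on (\<lambda>s. sig r n (j s)) {..<r}"
  shows "j \<in> (\<lambda>(\<pi>, i). Phi r n \<pi> i) ` ({\<pi>. \<pi> permutes {..<r}} \<times> idx r n)"
proof -
  have jl: "j s < offs n r" if "s < r" for s using assms(1) that by (auto simp: idx_def PiE_iff)
  define \<pi> where "\<pi> = (\<lambda>s. if s < r then sig r n (j s) else s)"
  have pinj: "inj_on \<pi> {..<r}" using assms(2) by (auto simp: \<pi>_def inj_on_def)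
  have pp: "\<pi> permutes {..<r}"
    by (rule inj_imp_permutes[OF pinj]) (auto simp: \<pi>_def sig_prop(1)[OF jl])
  have th: "(THE s. s < r \<and> sig r n (j s) = \<pi> t) = t" if "t < r" for t
  proof (rule the_equality)
    show "t < r \<and> sig r n (j t) = \<pi> t" using that by (simp add: \<pi>_def)
  next
    fix s assume "s < r \<and> sig r n (j s) = \<pi> t"
    then have "s < r" "\<pi> s = \<pi> t" by (auto simp: \<pi>_def)
    then show "s = t" using pinj that by (auto simp: inj_on_def)
  qed
  define i where "i = (\<lambda>k\<in>{..<r}. theta r n (j (THE s. s < r \<and> sig r n (j s) = k)))"
  have ipi: "i (\<pi> t) = theta r n (j t)" if "t < r" for t
  proof -
    have "\<pi> t < r" using permutes_in_image[OF pp] that by simp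
    then show ?thesis using th[OF that] by (simp add: i_def)
  qed
  have iidx: "i \<in> idx r n"
    unfolding idx_def i_def
  proof (rule restrict_PiE_iff[THEN iffD2], intro ballI)
    fix k assume k: "k \<in> {..<r}"
    have "k \<in> \<pi> ` {..<r}" using permutes_image[OF pp] k by simp
    then obtain t where t: "t < r" "\<pi> t = k" by auto
    have "theta r n (j t) < n (\<pi> t)"
      using sig_prop[OF jl[OF t(1)]] t(1) by (simp add: theta_def \<pi>_def)
    then show "theta r n (j (THE s. s < r \<and> sig r n (j s) = k)) \<in> {..<n k}"
      using th[OF t(1)] t by simp
  qed
  have "Phi r n \<pi> i = j"
  proof
    fix s show "Phi r n \<pi> i s = j s"
    proof (cases "s < r")
      case True
      then show ?thesis using ipi[OF True] sig_prop[OF jl[OF True]]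
        by (simp add: Phi_def theta_def \<pi>_def)
    next
      case False then show ?thesis using assms(1) by (auto simp: Phi_def idx_def PiE_iff extensional_def)
    qed
  qed
  then have "j = (\<lambda>(\<pi>, i). Phi r n \<pi> i) (\<pi>, i)" by simp
  moreover have "(\<pi>, i) \<in> {\<pi>. \<pi> permutes {..<r}} \<times> idx r n" using pp iidx by simp
  ultimately show ?thesis by (rule image_eqI)
qed


lemma Phi_injsig:
  assumes "\<pi> permutes {..<r}" "i \<in> idx r n"
  shows "inj_on (\<lambda>s. sig r n (Phi r n \<pi> i s)) {..<r}"
proof (rule inj_onI)
  have inj: "inj_on \<pi> {..<r}" using assms(1) permutes_inj_on by blast
  fix s t assume "s \<in> {..<r}" "t \<in> {..<r}" "sig r n (Phi r n \<pi> i s) = sig r n (Phi r n \<pi> i t)"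
  then have "\<pi> s = \<pi> t" using Phi_sig(1)[OF assms] by simp
  then show "s = t" using inj \<open>s \<in> {..<r}\<close> \<open>t \<in> {..<r}\<close> by (simp add: inj_on_eq_iff)
qed

definition G :: "nat \<Rightarrow> (nat \<Rightarrow> nat) \<Rightarrow> ((nat \<Rightarrow> nat) \<Rightarrow> real) \<Rightarrow> (nat \<Rightarrow> real) \<Rightarrow> real" where
  "G r n A x = (\<Sum>i\<in>idx r n. A i * (\<Prod>k<r. x (offs n k + i k)))"

lemma finite_idx: "finite (idx r n)" by (simp add: idx_def finite_PiE)

lemma formP_symm: "formP r (offs n r) (symm r n A) x = fact r * G r n A x"
proof -
  define S where "S = {j \<in> idx r (\<lambda>_. offs n r). inj_on (\<lambda>s. sig r n (j s)) {..<r}}"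
  define P where "P = {\<pi>. \<pi> permutes {..<r}}"
  let ?f = "\<lambda>j. symm r n A j * (\<Prod>s<r. x (j s))"
  have "formP r (offs n r) (symm r n A) x = sum ?f S"
    unfolding formP_def
    by (rule sum.mono_neutral_right) (auto simp: S_def finite_idx symm_def)
  also have "S = (\<lambda>(\<pi>, i). Phi r n \<pi> i) ` (P \<times> idx r n)"
    using Phi_surj Phi_idx Phi_injsig unfolding S_def P_def by fastforce
  also have "sum ?f \<dots> = sum (?f \<circ> (\<lambda>(\<pi>, i). Phi r n \<pi> i)) (P \<times> idx r n)"
    by (rule sum.reindex) (simp add: P_def Phi_inj)
  also have "\<dots> = (\<Sum>(\<pi>,i)\<in>P \<times> idx r n. A i * (\<Prod>k<r. x (offs n k + i k)))"
  proof (rule sum.cong[OF refl], clarify)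
    fix \<pi> i assume a: "\<pi> \<in> P" "i \<in> idx r n"
    then have pp: "\<pi> permutes {..<r}" by (simp add: P_def)
    have "(\<Prod>s<r. x (Phi r n \<pi> i s)) = (\<Prod>s<r. ((\<lambda>k. x (offs n k + i k)) \<circ> \<pi>) s)"
      by (rule prod.cong) (auto simp: Phi_def)
    also have "\<dots> = (\<Prod>k<r. x (offs n k + i k))" by (rule prod.permute[symmetric, OF pp])
    finally show "(?f \<circ> (\<lambda>(\<pi>, i). Phi r n \<pi> i)) (\<pi>, i) = A i * (\<Prod>k<r. x (offs n k + i k))"
      using symm_Phi[OF pp a(2)] by simp
  qed
  also have "\<dots> = (\<Sum>\<pi>\<in>P. \<Sum>i\<in>idx r n. A i * (\<Prod>k<r. x (offs n k + i k)))"
    by (rule sum.cartesian_product[symmetric])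
  also have "\<dots> = real (card P) * G r n A x" by (simp add: G_def)
  also have "card P = fact r" unfolding P_def by (rule card_permutations) auto
  finally show ?thesis by simp
qed



lemma pnorm_one:
  assumes "p > 0" "pnorm p m x = 1"
  shows "(\<Sum>i<m. norm (x i) powr p) = 1"
proof -
  let ?S = "\<Sum>i<m. norm (x i) powr p"
  have S0: "?S \<ge> 0" by (intro sum_nonneg) simp
  have "?S powr (1/p) = 1" using assms(2) by (simp add: pnorm_def)
  then have "?S \<noteq> 0" by auto
  have "?S = (?S powr (1/p)) powr p" using S0 assms(1) by (simp add: powr_powr)
  also have "\<dots> = 1" using \<open>?S powr (1/p) = 1\<close> by simp
  finally show ?thesis .
qed

lemma pnorm_from_sum: "(\<Sum>i<m. norm (x i) powr p) = 1 \<Longrightarrow> pnorm p m x = 1"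
  by (simp add: pnorm_def)

lemma pnorm_le1:
  assumes "p > 0" "pnorm p m x = 1" "i < m"
  shows "norm (x i) \<le> 1"
proof (rule ccontr)
  assume "\<not> norm (x i) \<le> 1"
  then have "1 < norm (x i)" by simp
  then have "1 powr p < norm (x i) powr p" using assms(1) by (intro powr_less_mono2) auto
  also have "\<dots> \<le> (\<Sum>i<m. norm (x i) powr p)"
    using assms(3) by (intro member_le_sum) auto
  also have "\<dots> = 1" using pnorm_one[OF assms(1,2)] .
  finally show False by simp
qed

lemma spnorm_bdd:
  assumes "p > 0"
  shows "bdd_above {cmod (\<Sum>i\<in>idx r n. complex_of_real (A i) * (\<Prod>k<r. cnj (xs k (i k))))
                        | xs :: nat \<Rightarrow> nat \<Rightarrow> complex. \<forall>k<r. pnorm p (n k) (xs k) = 1}"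
proof (rule bdd_aboveI, clarify)
  fix xs :: "nat \<Rightarrow> nat \<Rightarrow> complex" assume xs: "\<forall>k<r. pnorm p (n k) (xs k) = 1"
  have "cmod (\<Sum>i\<in>idx r n. complex_of_real (A i) * (\<Prod>k<r. cnj (xs k (i k))))
     \<le> (\<Sum>i\<in>idx r n. cmod (complex_of_real (A i) * (\<Prod>k<r. cnj (xs k (i k)))))"
    by (rule norm_sum)
  also have "\<dots> \<le> (\<Sum>i\<in>idx r n. \<bar>A i\<bar>)"
  proof (rule sum_mono)
    fix i assume i: "i \<in> idx r n"
    have "(\<Prod>k<r. cmod (cnj (xs k (i k)))) \<le> (\<Prod>k<r. 1)"
    proof (rule prod_mono)
      fix k assume k: "k \<in> {..<r}"
      show "0 \<le> cmod (cnj (xs k (i k))) \<and> cmod (cnj (xs k (i k))) \<le> 1"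
        using pnorm_le1[OF assms xs[rule_format] idx_lt[OF i]] k by simp
    qed
    then show "cmod (complex_of_real (A i) * (\<Prod>k<r. cnj (xs k (i k)))) \<le> \<bar>A i\<bar>"
      by (simp add: norm_mult prod_norm[symmetric] mult_left_le)
  qed
  finally show "cmod (\<Sum>i\<in>idx r n. complex_of_real (A i) * (\<Prod>k<r. cnj (xs k (i k)))) \<le> (\<Sum>i\<in>idx r n. \<bar>A i\<bar>)" .
qed

lemma spnorm_ne:
  assumes "\<forall>k<r. n k \<ge> 1" "p > 0"
  shows "\<exists>xs :: nat \<Rightarrow> nat \<Rightarrow> complex. \<forall>k<r. pnorm p (n k) (xs k) = 1"
proof -
  have "pnorm p (n k) (\<lambda>i. if i = 0 then 1 else 0 :: complex) = 1" if "k < r" for k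
  proof (rule pnorm_from_sum)
    have "(\<Sum>i<n k. norm (if i = 0 then 1 else 0 :: complex) powr p) = (\<Sum>i<n k. if i = 0 then 1 else 0)"
      using assms(2) by (intro sum.cong) auto
    also have "\<dots> = 1" using assms(1) that by (simp add: sum.delta Suc_le_eq)
    finally show "(\<Sum>i<n k. norm (if i = 0 then 1 else 0 :: complex) powr p) = 1" .
  qed
  then show ?thesis by (intro exI[of _ "\<lambda>k i. if i = 0 then 1 else 0"]) blast
qed

lemma spnorm_ge:
  assumes "p > 0" "\<forall>k<r. pnorm p (n k) (xs k) = 1"
  shows "cmod (\<Sum>i\<in>idx r n. complex_of_real (A i) * (\<Prod>k<r. cnj (xs k (i k)))) \<le> spnorm p r n A"
  unfolding spnorm_def by (rule cSup_upper[OF _ spnorm_bdd[OF assms(1)]]) (intro CollectI exI[of _ xs] conjI refl assms(2))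

lemma spnorm_nonneg:
  assumes "\<forall>k<r. n k \<ge> 1" "p > 0"
  shows "spnorm p r n A \<ge> 0"
proof -
  obtain xs :: "nat \<Rightarrow> nat \<Rightarrow> complex" where xs: "\<forall>k<r. pnorm p (n k) (xs k) = 1"
    using spnorm_ne[OF assms] by blast
  show ?thesis using spnorm_ge[OF assms(2) xs, of A] norm_ge_zero order_trans by blast
qed

lemma formP_bdd:
  assumes "p > 0"
  shows "bdd_above {\<bar>formP r N B x\<bar> | x. pnorm p N x = 1}"
proof (rule bdd_aboveI, clarify)
  fix x :: "nat \<Rightarrow> real" assume x: "pnorm p N x = 1"
  have "\<bar>formP r N B x\<bar> \<le> (\<Sum>j\<in>idx r (\<lambda>_. N). \<bar>B j * (\<Prod>s<r. x (j s))\<bar>)"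
    unfolding formP_def by (rule sum_abs)
  also have "\<dots> \<le> (\<Sum>j\<in>idx r (\<lambda>_. N). \<bar>B j\<bar>)"
  proof (rule sum_mono)
    fix j assume j: "j \<in> idx r (\<lambda>_. N)"
    have "(\<Prod>s<r. \<bar>x (j s)\<bar>) \<le> (\<Prod>s<r. 1)"
    proof (rule prod_mono)
      fix k assume k: "k \<in> {..<r}"
      show "0 \<le> \<bar>x (j k)\<bar> \<and> \<bar>x (j k)\<bar> \<le> 1"
        using pnorm_le1[OF assms x idx_lt[OF j]] k by simp
    qed
    then show "\<bar>B j * (\<Prod>s<r. x (j s))\<bar> \<le> \<bar>B j\<bar>"
      by (simp add: abs_mult abs_prod mult_left_le)
  qed
  finally show "\<bar>formP r N B x\<bar> \<le> (\<Sum>j\<in>idx r (\<lambda>_. N). \<bar>B j\<bar>)" .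
qed

lemma eta_ge:
  assumes "p > 0" "pnorm p N x = 1"
  shows "\<bar>formP r N B x\<bar> \<le> eta p r N B"
  unfolding eta_def by (rule cSup_upper[OF _ formP_bdd[OF assms(1)]]) (intro CollectI exI[of _ x] conjI refl assms(2))



lemma amgm_prod:
  assumes "r \<ge> 1" "p > 0" "\<And>k. k < r \<Longrightarrow> b k \<ge> 0" "(\<Sum>k<r. b k) = (1::real)"
  shows "(\<Prod>k<r. b k powr (1/p)) \<le> real r powr (-(real r / p))"
proof -
  have "(\<Prod>k<r. b k) powr (1 / real (card {..<r})) \<le> (\<Sum>k<r. b k / real (card {..<r}))"
    using assms(1,3) by (intro arith_geom_mean) (auto simp: lessThan_empty_iff)
  also have "\<dots> = 1 / real r" using assms(4) by (simp add: sum_divide_distrib[symmetric])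
  finally have h: "(\<Prod>k<r. b k) powr (1 / real r) \<le> 1 / real r" by simp
  have "(\<Prod>k<r. b k powr (1/p)) = (\<Prod>k<r. b k) powr (1/p)" by (simp add: prod_powr_distrib)
  also have "\<dots> = ((\<Prod>k<r. b k) powr (1 / real r)) powr (real r / p)"
    using assms(1) by (simp add: powr_powr)
  also have "\<dots> \<le> (1 / real r) powr (real r / p)"
    using h assms(2) by (intro powr_mono2) auto
  also have "\<dots> = real r powr (-(real r / p))"
    using assms(1) by (simp add: powr_divide powr_minus_divide)
  finally show ?thesis .
qed

lemma G_bound:
  assumes p: "p > 1" and r: "r \<ge> 1" and nk: "\<forall>k<r. n k \<ge> 1"
    and x: "(\<Sum>m<offs n r. \<bar>x m\<bar> powr p) = 1"
  shows "\<bar>G r n A x\<bar> \<le> real r powr (-(real r / p)) * spnorm p r n A"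
proof -
  have p0: "p > 0" using p by simp
  define b where "b k = (\<Sum>i<n k. \<bar>x (offs n k + i)\<bar> powr p)" for k
  define a where "a k = b k powr (1/p)" for k
  have b0: "b k \<ge> 0" for k by (simp add: b_def sum_nonneg)
  have bs: "(\<Sum>k<r. b k) = 1" using x by (simp add: b_def sum_blocks)
  have ap: "a k powr p = b k" for k using b0[of k] p0 by (simp add: a_def powr_powr)
  have spn: "spnorm p r n A \<ge> 0" using spnorm_nonneg[OF nk p0] .
  show ?thesis
  proof (cases "\<exists>k<r. b k = 0")
    case True
    then obtain k where k: "k < r" "b k = 0" by blast
    have xz: "x (offs n k + i) = 0" if "i < n k" for i
    proof -
      have "\<bar>x (offs n k + i)\<bar> powr p = 0"
        using k(2) that unfolding b_def by (subst (asm) sum_nonneg_eq_0_iff) auto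
      then show ?thesis by simp
    qed
    have "G r n A x = 0" unfolding G_def
    proof (rule sum.neutral, intro ballI)
      fix i assume i: "i \<in> idx r n"
      have "(\<Prod>k<r. x (offs n k + i k)) = 0"
        using k(1) xz[OF idx_lt[OF i k(1)]] by (intro prod_zero) auto
      then show "A i * (\<Prod>k<r. x (offs n k + i k)) = 0" by simp
    qed
    then show ?thesis using spn by simp
  next
    case False
    then have bpos: "b k > 0" if "k < r" for k using b0[of k] that by force
    then have apos: "a k > 0" if "k < r" for k using bpos[OF that] by (simp add: a_def)
    define xs where "xs k i = complex_of_real (x (offs n k + i) / a k)" for k i
    have xsn: "\<forall>k<r. pnorm p (n k) (xs k) = 1"
    proof (intro allI impI pnorm_from_sum)
      fix k assume k: "k < r"
      have "(\<Sum>i<n k. norm (xs k i) powr p) = (\<Sum>i<n k. \<bar>x (offs n k + i)\<bar> powr p / a k powr p)"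
        using apos[OF k] by (intro sum.cong) (auto simp: xs_def powr_divide norm_divide)
      also have "\<dots> = b k / a k powr p" by (simp add: b_def sum_divide_distrib)
      also have "\<dots> = 1" using ap[of k] bpos[OF k] by simp
      finally show "(\<Sum>i<n k. norm (xs k i) powr p) = 1" .
    qed
    have "(\<Sum>i\<in>idx r n. complex_of_real (A i) * (\<Prod>k<r. cnj (xs k (i k))))
          = complex_of_real (G r n A x / (\<Prod>k<r. a k))"
    proof -
      have "(\<Sum>i\<in>idx r n. complex_of_real (A i) * (\<Prod>k<r. cnj (xs k (i k))))
         = (\<Sum>i\<in>idx r n. complex_of_real (A i * (\<Prod>k<r. x (offs n k + i k) / a k)))"
        by (simp add: xs_def)
      also have "\<dots> = complex_of_real (\<Sum>i\<in>idx r n. A i * (\<Prod>k<r. x (offs n k + i k) / a k))"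
        by simp
      also have "(\<Sum>i\<in>idx r n. A i * (\<Prod>k<r. x (offs n k + i k) / a k)) = G r n A x / (\<Prod>k<r. a k)"
        by (simp add: G_def prod_dividef sum_divide_distrib)
      finally show ?thesis .
    qed
    note eq = this
    have "\<bar>G r n A x / (\<Prod>k<r. a k)\<bar> \<le> spnorm p r n A"
      using spnorm_ge[OF p0 xsn, of A] unfolding eq norm_of_real .
    moreover have pa: "(\<Prod>k<r. a k) > 0" using apos by (intro prod_pos) auto
    ultimately have "\<bar>G r n A x\<bar> \<le> (\<Prod>k<r. a k) * spnorm p r n A"
      by (simp add: abs_div pos_divide_le_eq mult.commute)
    also have "\<dots> \<le> real r powr (-(real r / p)) * spnorm p r n A"
      using amgm_prod[OF r p0 b0 bs] spn by (intro mult_right_mono) (auto simp: a_def)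
    finally show ?thesis .
  qed
qed



lemma elem_le:
  assumes p: "p > 1" and r: "r \<ge> 1" and A: "\<forall>i\<in>idx r n. A i \<ge> 0"
    and xs: "\<forall>k<r. pnorm p (n k) (xs k) = 1"
  shows "fact r * (real r powr (-(real r / p)) * cmod (\<Sum>i\<in>idx r n. complex_of_real (A i) * (\<Prod>k<r. cnj (xs k (i k)))))
         \<le> eta p r (offs n r) (symm r n A)"
proof -
  have p0: "p > 0" using p by simp
  define c where "c = real r powr (-1/p)"
  have c0: "c \<ge> 0" by (simp add: c_def)
  have "c powr p = real r powr (-1 / p * p)" by (simp add: c_def powr_powr)
  also have "-1 / p * p = -1" using p0 by simp
  finally have cp: "c powr p = 1 / real r" using r by (simp add: powr_minus_divide)
  have cr: "c ^ r = real r powr (-(real r / p))" using r by (simp add: c_def powr_power)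
  define y where "y m = (if m < offs n r then cmod (xs (sig r n m) (theta r n m)) * c else 0)" for m
  have yb: "y (offs n k + i) = cmod (xs k i) * c" if "k < r" "i < n k" for k i
    using that by (simp add: y_def block_lt sig_block theta_block)
  have "(\<Sum>m<offs n r. norm (y m) powr p) = (\<Sum>k<r. \<Sum>i<n k. norm (y (offs n k + i)) powr p)"
    by (rule sum_blocks)
  also have "\<dots> = (\<Sum>k<r. (\<Sum>i<n k. norm (xs k i) powr p) * (1 / real r))"
  proof (rule sum.cong[OF refl])
    fix k assume k: "k \<in> {..<r}"
    have "(\<Sum>i<n k. norm (y (offs n k + i)) powr p) = (\<Sum>i<n k. norm (xs k i) powr p * (1 / real r))"
      using k c0 by (intro sum.cong) (auto simp: yb powr_mult cp)
    then show "(\<Sum>i<n k. norm (y (offs n k + i)) powr p) = (\<Sum>i<n k. norm (xs k i) powr p) * (1 / real r)"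
      by (simp add: sum_divide_distrib)
  qed
  also have "\<dots> = (\<Sum>k<r. 1 / real r)"
    using pnorm_one[OF p0] xs by (intro sum.cong) auto
  also have "\<dots> = 1" using r by simp
  finally have yn: "pnorm p (offs n r) y = 1" by (rule pnorm_from_sum)
  have "cmod (\<Sum>i\<in>idx r n. complex_of_real (A i) * (\<Prod>k<r. cnj (xs k (i k))))
      \<le> (\<Sum>i\<in>idx r n. cmod (complex_of_real (A i) * (\<Prod>k<r. cnj (xs k (i k)))))"
    by (rule norm_sum)
  also have "\<dots> = (\<Sum>i\<in>idx r n. A i * (\<Prod>k<r. cmod (xs k (i k))))"
    using A by (intro sum.cong) (auto simp: norm_mult prod_norm[symmetric])
  finally have h1: "cmod (\<Sum>i\<in>idx r n. complex_of_real (A i) * (\<Prod>k<r. cnj (xs k (i k))))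
      \<le> (\<Sum>i\<in>idx r n. A i * (\<Prod>k<r. cmod (xs k (i k))))" .
  have "G r n A y = (\<Sum>i\<in>idx r n. A i * (\<Prod>k<r. cmod (xs k (i k))) * c ^ r)"
    unfolding G_def
  proof (rule sum.cong[OF refl])
    fix i assume i: "i \<in> idx r n"
    have "(\<Prod>k<r. y (offs n k + i k)) = (\<Prod>k<r. cmod (xs k (i k)) * c)"
      using idx_lt[OF i] by (intro prod.cong) (auto simp: yb)
    also have "\<dots> = (\<Prod>k<r. cmod (xs k (i k))) * c ^ r" by (simp add: prod.distrib)
    finally show "A i * (\<Prod>k<r. y (offs n k + i k)) = A i * (\<Prod>k<r. cmod (xs k (i k))) * c ^ r" by simp
  qed
  also have "\<dots> = (\<Sum>i\<in>idx r n. A i * (\<Prod>k<r. cmod (xs k (i k)))) * c ^ r"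
    by (simp add: sum_distrib_right)
  finally have h2: "real r powr (-(real r / p)) * cmod (\<Sum>i\<in>idx r n. complex_of_real (A i) * (\<Prod>k<r. cnj (xs k (i k))))
      \<le> G r n A y"
    using h1 c0 by (simp add: cr mult.commute mult_left_mono)
  have "fact r * (real r powr (-(real r / p)) * cmod (\<Sum>i\<in>idx r n. complex_of_real (A i) * (\<Prod>k<r. cnj (xs k (i k)))))
      \<le> fact r * G r n A y"
    using h2 by (intro mult_left_mono) auto
  also have "\<dots> = formP r (offs n r) (symm r n A) y" by (simp add: formP_symm)
  also have "\<dots> \<le> \<bar>formP r (offs n r) (symm r n A) y\<bar>" by simp
  also have "\<dots> \<le> eta p r (offs n r) (symm r n A)" by (rule eta_ge[OF p0 yn])
  finally show ?thesis .
qed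



theorem theorem16:
  fixes p :: real and r :: nat and n :: "nat \<Rightarrow> nat" and A :: "(nat \<Rightarrow> nat) \<Rightarrow> real"
  assumes "p > 1" and "r \<ge> 1" and "\<forall>k<r. n k \<ge> 1"
  shows "eta p r (\<Sum>k<r. n k) (symm r n A) \<le> fact r / real r powr (real r / p) * spnorm p r n A \<and>
         ((\<forall>i\<in>idx r n. A i \<ge> 0) \<longrightarrow>
         eta p r (\<Sum>k<r. n k) (symm r n A) = fact r / real r powr (real r / p) * spnorm p r n A)"
proof -
  have p0: "p > 0" using assms(1) by simp
  have N: "(\<Sum>k<r. n k) = offs n r" by (simp add: offs_def)
  define q where "q = real r powr (-(real r / p))"
  have q0: "q > 0" using assms(2) by (simp add: q_def)
  have cq: "fact r / real r powr (real r / p) = fact r * q" by (simp add: q_def powr_minus_divide)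
  have spn: "spnorm p r n A \<ge> 0" using spnorm_nonneg[OF assms(3) p0] .
  have Npos: "offs n r \<ge> 1"
    using offs_le[of 0 r n] assms(2,3) by (auto simp: offs_def)
  define x0 :: "nat \<Rightarrow> real" where "x0 m = (if m = 0 then 1 else 0)" for m
  have x0n: "pnorm p (offs n r) x0 = 1"
  proof (rule pnorm_from_sum)
    have "(\<Sum>i<offs n r. norm (x0 i) powr p) = (\<Sum>i<offs n r. if i = 0 then 1 else 0)"
      using p0 by (intro sum.cong) (auto simp: x0_def)
    also have "\<dots> = 1" using Npos by (simp add: sum.delta)
    finally show "(\<Sum>i<offs n r. norm (x0 i) powr p) = 1" .
  qed
  have a: "eta p r (offs n r) (symm r n A) \<le> fact r * q * spnorm p r n A"
    unfolding eta_def
  proof (rule cSup_least)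
    show "{\<bar>formP r (offs n r) (symm r n A) x\<bar> | x. pnorm p (offs n r) x = 1} \<noteq> {}"
      using x0n by blast
  next
    fix v assume "v \<in> {\<bar>formP r (offs n r) (symm r n A) x\<bar> | x. pnorm p (offs n r) x = 1}"
    then obtain x where x: "pnorm p (offs n r) x = 1" and v: "v = \<bar>formP r (offs n r) (symm r n A) x\<bar>"
      by blast
    have xs: "(\<Sum>m<offs n r. \<bar>x m\<bar> powr p) = 1" using pnorm_one[OF p0 x] by simp
    have "v = fact r * \<bar>G r n A x\<bar>" using v by (simp add: formP_symm abs_mult)
    also have "\<dots> \<le> fact r * (q * spnorm p r n A)"
      using G_bound[OF assms xs, of A] by (intro mult_left_mono) (auto simp: q_def)
    finally show "v \<le> fact r * q * spnorm p r n A" by simp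
  qed
  have b: "fact r * q * spnorm p r n A \<le> eta p r (offs n r) (symm r n A)"
    if A: "\<forall>i\<in>idx r n. A i \<ge> 0"
  proof -
    have fq: "fact r * q > 0" using q0 by simp
    have "spnorm p r n A \<le> eta p r (offs n r) (symm r n A) / (fact r * q)"
      unfolding spnorm_def
    proof (rule cSup_least)
      obtain xs :: "nat \<Rightarrow> nat \<Rightarrow> complex" where xs: "\<forall>k<r. pnorm p (n k) (xs k) = 1"
        using spnorm_ne[OF assms(3) p0] by blast
      then show "{cmod (\<Sum>i\<in>idx r n. complex_of_real (A i) * (\<Prod>k<r. cnj (xs k (i k))))
                        | xs :: nat \<Rightarrow> nat \<Rightarrow> complex. \<forall>k<r. pnorm p (n k) (xs k) = 1} \<noteq> {}"
        by blast
    next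
      fix v assume "v \<in> {cmod (\<Sum>i\<in>idx r n. complex_of_real (A i) * (\<Prod>k<r. cnj (xs k (i k))))
                        | xs :: nat \<Rightarrow> nat \<Rightarrow> complex. \<forall>k<r. pnorm p (n k) (xs k) = 1}"
      then obtain xs :: "nat \<Rightarrow> nat \<Rightarrow> complex" where xs: "\<forall>k<r. pnorm p (n k) (xs k) = 1"
        and v: "v = cmod (\<Sum>i\<in>idx r n. complex_of_real (A i) * (\<Prod>k<r. cnj (xs k (i k))))"
        by blast
      have "fact r * q * v \<le> eta p r (offs n r) (symm r n A)"
        using elem_le[OF assms(1,2) A xs] v by (simp add: q_def mult.assoc)
      then show "v \<le> eta p r (offs n r) (symm r n A) / (fact r * q)"
        using fq by (simp add: pos_le_divide_eq mult.commute)
    qed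
    then show ?thesis using fq by (simp add: pos_le_divide_eq mult.commute)
  qed
  show ?thesis unfolding N cq using a b by (auto intro: order_antisym)
qed


end
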